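(* Let $\mathfrak g\xrightarrow{\mu}\mathfrak h$ be a crossed module of Lie algebras, $\phi:W\to V$ linear, $\rho$ a 2-representation on $\phi$. Let $\omega\in\bigwedge^q\mathfrak g_p^*\otimes V$ and $\Xi=(\xi_0,\dots,\xi_q)\in\mathfrak g_{p+1}^{q+1}$ with $\xi_j=(x_j^0,\dots,x_j^p;y_j)$. Then $$\delta\partial\omega(\Xi)=\partial\delta\omega(\Xi)+\phi\Big(\sum_{j=0}^q(-1)^j\rho_1(x_j^0)\omega(\partial_0\Xi(j))\Big)=\partial\delta\omega(\Xi)+\Delta\delta_{(1)}\omega(\Xi).$$
   Context: Crossed module: Lie algebras $\mathfrak g,\mathfrak h$, Lie homomorphism $\mu$, action $\mathcal L:\mathfrak h\to\mathrm{Der}(\mathfrak g)$ with $\mu(\mathcal L_yx)=[y,\mu(x)]$, $\mathcal L_{\mu(x_0)}x_1=[x_0,x_1]$; $\mathfrak g\oplus_{\mathcal L}\mathfrak h$ has bracket $[(x_0,y_0),(x_1,y_1)]=([x_0,x_1]+\mathcal L_{y_0}x_1-\mathcal L_{y_1}x_0,[y_0,y_1])$. 2-representation: linear $\rho_0^1:\mathfrak h\to\mathfrak{gl}(W)$, $\rho_0^0:\mathfrak h\to\mathfrak{gl}(V)$, $\rho_1:\mathfrak g\to\mathrm{Hom}(V,W)$ with $\rho_0^1,\rho_0^0$ representations, $\phi\rho_0^1(y)=\rho_0^0(y)\phi$, $\rho_1([x_0,x_1])=\rho_1(x_0)\phi\rho_1(x_1)-\rho_1(x_1)\phi\rho_1(x_0)$,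 $\rho_0^0(\mu(x))=\phi\rho_1(x)$, $\rho_0^1(\mu(x))=\rho_1(x)\phi$, $\rho_1(\mathcal L_yx)=\rho_0^1(y)\rho_1(x)-\rho_1(x)\rho_0^0(y)$. $\mathfrak g_0=\mathfrak h$; for $p\ge1$, $\mathfrak g_p=\mathfrak g^p\oplus\mathfrak h$, elements $(x^0,\dots,x^{p-1};y)$, a Lie algebra via identification with composable strings $(a_0,\dots,a_{p-1})\in(\mathfrak g\oplus_{\mathcal L}\mathfrak h)^p$, $a_j=(x^j,y+\sum_{k>j}\mu(x^k))$, componentwise bracket. Face maps $\partial_k:\mathfrak g_{p+1}\to\mathfrak g_p$: $\partial_0(x^0,\dots,x^p;y)=(x^1,\dots,x^p;y)$, $\partial_k(\dots)=(x^0,\dots,x^{k-1}+x^k,\dots,x^p;y)$ ($0<k\le p$), $\partial_{p+1}(\dots)=(x^0,\dots,x^{p-1};y+\mu(x^p))$, applied componentwise to tuples; $\hat t_p(x^0,\dots,x^{p-1};y)=y+\sum\mu(x^j)$. $X(j),X(m,n)$: removal of entries. $C^{p,q}_0=\bigwedge^q\mathfrak g_p^*\otimes V$, $C^{p,q}_1=\bigwedge^q\mathfrak g_p^*\otimes\mathfrak g^*\otimes W$. $\delta:C^{p,q}_0\to C^{p,q+1}_0$ is the Chevalley–Eilenberg differential of $\mathfrak g_p$ with values in $V$ for the representation $\rho_0^0\circ\hat t_p$: $\delta\omega(\xi_0,\dots,\xi_q)=\sum_j(-1)^j\rho_0^0(\hat t_p(\xi_j))\omega(\Xi(j))+\sum_{m<n}(-1)^{m+n}\omega([\xi_m,\xi_n],\Xi(m,n))$.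 $\partial\omega(\Xi)=\sum_{k=0}^{p+1}(-1)^k\omega(\partial_k\Xi)$. $\delta_{(1)}:C^{p,q}_0\to C^{p,q}_1$, $\delta_{(1)}\omega(\Xi;x)=\rho_1(x)\omega(\Xi)$. $\Delta:C^{p,q}_1\to C^{p+1,q+1}_0$, $\Delta\beta(\xi_0,\dots,\xi_q)=\phi\big(\sum_j(-1)^j\beta(\partial_0\Xi(j);x_j^0)\big)$. *)

theory Defs
  imports "HOL-Analysis.Analysis"
begin

definition lie_algebra :: "('a::real_vector \<Rightarrow> 'a \<Rightarrow> 'a) \<Rightarrow> bool" where
  "lie_algebra br \<longleftrightarrow> bilinear br \<and> (\<forall>x. br x x = 0) \<and>
     (\<forall>x y z. br x (br y z) + br y (br z x) + br z (br x y) = 0)"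

definition lie_hom ::
  "('a::real_vector \<Rightarrow> 'a \<Rightarrow> 'a) \<Rightarrow> ('b::real_vector \<Rightarrow> 'b \<Rightarrow> 'b) \<Rightarrow> ('a \<Rightarrow> 'b) \<Rightarrow> bool" where
  "lie_hom ba bb f \<longleftrightarrow> linear f \<and> (\<forall>x y. f (ba x y) = bb (f x) (f y))"

definition representation ::
  "('h::real_vector \<Rightarrow> 'h \<Rightarrow> 'h) \<Rightarrow> ('h \<Rightarrow> 'v::real_vector \<Rightarrow> 'v) \<Rightarrow> bool" where
  "representation bh r \<longleftrightarrow> (\<forall>v. linear (\<lambda>y. r y v)) \<and> (\<forall>y. linear (r y)) \<and>
     (\<forall>y0 y1 v. r (bh y0 y1) v = r y0 (r y1 v) - r y1 (r y0 v))"

definition crossed_module ::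
  "('g::real_vector \<Rightarrow> 'g \<Rightarrow> 'g) \<Rightarrow> ('h::real_vector \<Rightarrow> 'h \<Rightarrow> 'h) \<Rightarrow> ('g \<Rightarrow> 'h)
   \<Rightarrow> ('h \<Rightarrow> 'g \<Rightarrow> 'g) \<Rightarrow> bool" where
  "crossed_module bg bh \<mu> L \<longleftrightarrow>
     lie_algebra bg \<and> lie_algebra bh \<and> lie_hom bg bh \<mu> \<and>
     \<comment> \<open>L is a Lie algebra morphism h \<rightarrow> Der(g)\<close>
     (\<forall>x. linear (\<lambda>y. L y x)) \<and> (\<forall>y. linear (L y)) \<and>
     (\<forall>y x0 x1. L y (bg x0 x1) = bg (L y x0) x1 + bg x0 (L y x1)) \<and>
     (\<forall>y0 y1 x. L (bh y0 y1) x = L y0 (L y1 x) - L y1 (L y0 x)) \<and>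
     (\<forall>y x. \<mu> (L y x) = bh y (\<mu> x)) \<and>
     (\<forall>x0 x1. L (\<mu> x0) x1 = bg x0 x1)"

definition two_representation ::
  "('g::real_vector \<Rightarrow> 'g \<Rightarrow> 'g) \<Rightarrow> ('h::real_vector \<Rightarrow> 'h \<Rightarrow> 'h) \<Rightarrow> ('g \<Rightarrow> 'h)
   \<Rightarrow> ('h \<Rightarrow> 'g \<Rightarrow> 'g) \<Rightarrow> ('w::real_vector \<Rightarrow> 'v::real_vector)
   \<Rightarrow> ('h \<Rightarrow> 'w \<Rightarrow> 'w) \<Rightarrow> ('h \<Rightarrow> 'v \<Rightarrow> 'v) \<Rightarrow> ('g \<Rightarrow> 'v \<Rightarrow> 'w) \<Rightarrow> bool" where
  "two_representation bg bh \<mu> L \<phi> r01 r00 r1 \<longleftrightarrow>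
     linear \<phi> \<and> (\<forall>v. linear (\<lambda>x. r1 x v)) \<and> (\<forall>x. linear (r1 x)) \<and>
     representation bh r01 \<and> representation bh r00 \<and>
     (\<forall>y w. \<phi> (r01 y w) = r00 y (\<phi> w)) \<and>
     (\<forall>x0 x1 v. r1 (bg x0 x1) v = r1 x0 (\<phi> (r1 x1 v)) - r1 x1 (\<phi> (r1 x0 v))) \<and>
     (\<forall>x v. r00 (\<mu> x) v = \<phi> (r1 x v)) \<and>
     (\<forall>x w. r01 (\<mu> x) w = r1 x (\<phi> w)) \<and>
     (\<forall>y x v. r1 (L y x) v = r01 y (r1 x v) - r1 x (r00 y v))"

text \<open>An element (x^0,...,x^{p-1};y) of g_p is represented as the pair (xs, y)
  with xs a list of length p.  g_0 = h corresponds to ([], y).\<close>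

definition gp_carrier :: "nat \<Rightarrow> ('g list \<times> 'h) set" where
  "gp_carrier p = {\<xi>. length (fst \<xi>) = p}"

definition gp_add :: "('g::real_vector list \<times> 'h::real_vector) \<Rightarrow> ('g list \<times> 'h) \<Rightarrow> ('g list \<times> 'h)" where
  "gp_add a b = (map2 (+) (fst a) (fst b), snd a + snd b)"

definition gp_scale :: "real \<Rightarrow> ('g::real_vector list \<times> 'h::real_vector) \<Rightarrow> ('g list \<times> 'h)" where
  "gp_scale c a = (map (scaleR c) (fst a), c *\<^sub>R snd a)"

definition sd_bracket ::
  "('g::real_vector \<Rightarrow> 'g \<Rightarrow> 'g) \<Rightarrow> ('h::real_vector \<Rightarrow> 'h \<Rightarrow> 'h) \<Rightarrow> ('h \<Rightarrow> 'g \<Rightarrow> 'g)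
   \<Rightarrow> ('g \<times> 'h) \<Rightarrow> ('g \<times> 'h) \<Rightarrow> ('g \<times> 'h)" where
  "sd_bracket bg bh L a b =
     (bg (fst a) (fst b) + L (snd a) (fst b) - L (snd b) (fst a), bh (snd a) (snd b))"

text \<open>Identification of (x^0,...,x^{p-1};y) with the composable string
  (a_0,...,a_{p-1}), a_j = (x^j, y + sum_{k>j} mu(x^k)).\<close>
definition to_string :: "('g \<Rightarrow> 'h::real_vector) \<Rightarrow> ('g list \<times> 'h) \<Rightarrow> ('g \<times> 'h) list" where
  "to_string \<mu> \<xi> = map (\<lambda>j. (fst \<xi> ! j, snd \<xi> + (\<Sum>k\<in>{j<..<length (fst \<xi>)}. \<mu> (fst \<xi> ! k))))
                      [0..<length (fst \<xi>)]"

text \<open>Bracket on g_p transported from the componentwise bracket of strings: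
  the g-components are those of the componentwise bracket, and the h-component
  (that of the last entry of the string, resp. the h-bracket when p = 0) is [y,y'].\<close>
definition gp_bracket ::
  "('g::real_vector \<Rightarrow> 'g \<Rightarrow> 'g) \<Rightarrow> ('h::real_vector \<Rightarrow> 'h \<Rightarrow> 'h) \<Rightarrow> ('g \<Rightarrow> 'h) \<Rightarrow> ('h \<Rightarrow> 'g \<Rightarrow> 'g)
   \<Rightarrow> ('g list \<times> 'h) \<Rightarrow> ('g list \<times> 'h) \<Rightarrow> ('g list \<times> 'h)" where
  "gp_bracket bg bh \<mu> L \<xi> \<eta> =
     (map fst (map2 (sd_bracket bg bh L) (to_string \<mu> \<xi>) (to_string \<mu> \<eta>)), bh (snd \<xi>) (snd \<eta>))"

definition t_hat :: "('g \<Rightarrow> 'h::real_vector) \<Rightarrow> ('g list \<times> 'h) \<Rightarrow> 'h" where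
  "t_hat \<mu> \<xi> = snd \<xi> + sum_list (map \<mu> (fst \<xi>))"

text \<open>Face maps partial_k : g_{p+1} \<rightarrow> g_p, k = 0..p+1 (input lists of length p+1).\<close>
definition face :: "('g::real_vector \<Rightarrow> 'h::real_vector) \<Rightarrow> nat \<Rightarrow> nat \<Rightarrow> ('g list \<times> 'h) \<Rightarrow> ('g list \<times> 'h)" where
  "face \<mu> p k \<xi> =
     (if k = 0 then (tl (fst \<xi>), snd \<xi>)
      else if k \<le> p then
        (take (k - 1) (fst \<xi>) @ [fst \<xi> ! (k - 1) + fst \<xi> ! k] @ drop (k + 1) (fst \<xi>), snd \<xi>)
      else (butlast (fst \<xi>), snd \<xi> + \<mu> (last (fst \<xi>))))"

definition remove1_at :: "nat \<Rightarrow> 'a list \<Rightarrow> 'a list" where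
  "remove1_at j xs = take j xs @ drop (Suc j) xs"

definition remove2_at :: "nat \<Rightarrow> nat \<Rightarrow> 'a list \<Rightarrow> 'a list" where
  "remove2_at m n xs = remove1_at m (remove1_at n xs)"

text \<open>C^{p,q}_0: alternating q-multilinear maps g_p^q \<rightarrow> V, represented as functions
  on lists of elements of g_p (only values on lists of length q in gp_carrier p matter).\<close>
definition alt_multilinear :: "nat \<Rightarrow> nat \<Rightarrow> (('g::real_vector list \<times> 'h::real_vector) list \<Rightarrow> 'v::real_vector) \<Rightarrow> bool" where
  "alt_multilinear p q \<omega> \<longleftrightarrow>
     (\<forall>\<Xi> i a b c. length \<Xi> = q \<and> set \<Xi> \<subseteq> gp_carrier p \<and> i < q \<and>
        a \<in> gp_carrier p \<and> b \<in> gp_carrier p \<longrightarrow>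
        \<omega> (\<Xi>[i := gp_add a b]) = \<omega> (\<Xi>[i := a]) + \<omega> (\<Xi>[i := b]) \<and>
        \<omega> (\<Xi>[i := gp_scale c a]) = c *\<^sub>R \<omega> (\<Xi>[i := a])) \<and>
     (\<forall>\<Xi> i j. length \<Xi> = q \<and> set \<Xi> \<subseteq> gp_carrier p \<and> i < j \<and> j < q \<and> \<Xi> ! i = \<Xi> ! j
        \<longrightarrow> \<omega> \<Xi> = 0)"

definition ce_delta ::
  "('g::real_vector \<Rightarrow> 'g \<Rightarrow> 'g) \<Rightarrow> ('h::real_vector \<Rightarrow> 'h \<Rightarrow> 'h) \<Rightarrow> ('g \<Rightarrow> 'h) \<Rightarrow> ('h \<Rightarrow> 'g \<Rightarrow> 'g)
   \<Rightarrow> ('h \<Rightarrow> 'v::real_vector \<Rightarrow> 'v) \<Rightarrow> (('g list \<times> 'h) list \<Rightarrow> 'v) \<Rightarrow> ('g list \<times> 'h) list \<Rightarrow> 'v" where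
  "ce_delta bg bh \<mu> L r00 \<omega> \<Xi> =
     (\<Sum>j<length \<Xi>. ((-1) ^ j) *\<^sub>R r00 (t_hat \<mu> (\<Xi> ! j)) (\<omega> (remove1_at j \<Xi>))) +
     (\<Sum>(m, n)\<in>{(m, n). m < n \<and> n < length \<Xi>}.
        ((-1) ^ (m + n)) *\<^sub>R \<omega> (gp_bracket bg bh \<mu> L (\<Xi> ! m) (\<Xi> ! n) # remove2_at m n \<Xi>))"

definition simp_partial ::
  "('g::real_vector \<Rightarrow> 'h::real_vector) \<Rightarrow> nat \<Rightarrow> (('g list \<times> 'h) list \<Rightarrow> 'v::real_vector)
   \<Rightarrow> ('g list \<times> 'h) list \<Rightarrow> 'v" where
  "simp_partial \<mu> p \<omega> \<Xi> = (\<Sum>k\<in>{0..p+1}. ((-1) ^ k) *\<^sub>R \<omega> (map (face \<mu> p k) \<Xi>))"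

definition delta1 :: "('g \<Rightarrow> 'v \<Rightarrow> 'w) \<Rightarrow> ('c \<Rightarrow> 'v) \<Rightarrow> 'c \<Rightarrow> 'g \<Rightarrow> 'w" where
  "delta1 r1 \<omega> \<Xi> x = r1 x (\<omega> \<Xi>)"

definition Delta ::
  "('g::real_vector \<Rightarrow> 'h::real_vector) \<Rightarrow> nat \<Rightarrow> ('w::real_vector \<Rightarrow> 'v::real_vector)
   \<Rightarrow> (('g list \<times> 'h) list \<Rightarrow> 'g \<Rightarrow> 'w) \<Rightarrow> ('g list \<times> 'h) list \<Rightarrow> 'v" where
  "Delta \<mu> p \<phi> \<beta> \<Xi> =
     \<phi> (\<Sum>j<length \<Xi>. ((-1) ^ j) *\<^sub>R \<beta> (map (face \<mu> p 0) (remove1_at j \<Xi>)) (hd (fst (\<Xi> ! j))))"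

end

theory Submission imports Defs begin

lemma alg:
  fixes a :: "nat \<Rightarrow> nat \<Rightarrow> 'v::real_vector" and c :: "nat \<Rightarrow> 'v"
    and b :: "nat \<times> nat \<Rightarrow> nat \<Rightarrow> 'v" and I :: "(nat\<times>nat) set"
  assumes "finite I"
  shows "(\<Sum>j<N. ((-1::real)^j) *\<^sub>R (\<Sum>k\<in>{0..P}. ((-1::real)^k) *\<^sub>R a j k)) +
         (\<Sum>(m,n)\<in>I. ((-1::real)^(m+n)) *\<^sub>R (\<Sum>k\<in>{0..P}. ((-1::real)^k) *\<^sub>R b (m,n) k))
       = (\<Sum>k\<in>{0..P}. ((-1::real)^k) *\<^sub>R ((\<Sum>j<N. ((-1::real)^j) *\<^sub>R (a j k - (if k = 0 then c j else 0)))
             + (\<Sum>(m,n)\<in>I. ((-1::real)^(m+n)) *\<^sub>R b (m,n) k)))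
         + (\<Sum>j<N. ((-1::real)^j) *\<^sub>R c j)"
proof -
  have e1: "(\<Sum>k\<in>{0..P}. ((-1::real)^k) *\<^sub>R (\<Sum>j<N. ((-1::real)^j) *\<^sub>R (if k = 0 then c j else 0)))
     = (\<Sum>j<N. ((-1::real)^j) *\<^sub>R c j)"
  proof -
    have "\<And>k. ((-1::real)^k) *\<^sub>R (\<Sum>j<N. ((-1::real)^j) *\<^sub>R (if k = 0 then c j else 0))
       = (if k = 0 then (\<Sum>j<N. ((-1::real)^j) *\<^sub>R c j) else 0)" by simp
    then show ?thesis by simp
  qed
  show ?thesis
    apply (simp add: scaleR_right.sum scaleR_right_diff_distrib sum_subtractf sum.distrib case_prod_unfold scaleR_right_distrib)
    apply (subst sum.swap[of _ "{..<N}"])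
    apply (subst sum.swap[of _ I])
    using e1 apply (simp add: scaleR_right.sum scaleR_right_diff_distrib sum_subtractf sum.distrib case_prod_unfold)
    apply (simp add: mult.commute)
    done
qed

definition sfx :: "('g \<Rightarrow> 'h::real_vector) \<Rightarrow> 'g list \<Rightarrow> nat \<Rightarrow> 'h" where
  "sfx \<mu> xs j = sum_list (map \<mu> (drop (Suc j) xs))"

lemma sum_sfx: "(\<Sum>k\<in>{j<..<length xs}. \<mu> (xs!k)) = sfx \<mu> xs j"
proof (induction xs arbitrary: j)
  case Nil
  then show ?case by (simp add: sfx_def)
next
  case (Cons x xs)
  show ?case
  proof (cases j)
    case 0
    have "(\<Sum>k\<in>{0<..<length (x#xs)}. \<mu> ((x#xs)!k)) = (\<Sum>k\<in>Suc ` {..<length xs}. \<mu> ((x#xs)!k))"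
      by (rule sum.cong) (auto simp: image_iff gr0_conv_Suc)
    also have "\<dots> = (\<Sum>k<length xs. \<mu> (xs!k))" by (subst sum.reindex) auto
    also have "\<dots> = sum_list (map \<mu> xs)" by (simp add: sum_list_sum_nth atLeast0LessThan)
    finally show ?thesis using 0 by (simp add: sfx_def)
  next
    case (Suc i)
    have "(\<Sum>k\<in>{j<..<length (x#xs)}. \<mu> ((x#xs)!k)) = (\<Sum>k\<in>Suc ` {i<..<length xs}. \<mu> ((x#xs)!k))"
      by (rule sum.cong) (auto simp: Suc image_iff gr0_conv_Suc Suc_less_eq2)
    also have "\<dots> = (\<Sum>k\<in>{i<..<length xs}. \<mu> (xs!k))" by (subst sum.reindex) auto
    finally show ?thesis using Cons Suc by (simp add: sfx_def)
  qed
qed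

lemma to_string_nth: "j < length (fst \<xi>) \<Longrightarrow> to_string \<mu> \<xi> ! j = (fst \<xi> ! j, snd \<xi> + sfx \<mu> (fst \<xi>) j)"
  by (simp add: to_string_def sum_sfx)

lemma length_to_string[simp]: "length (to_string \<mu> \<xi>) = length (fst \<xi>)"
  by (simp add: to_string_def)

lemma gpb_len: "length (fst a) = length (fst b) \<Longrightarrow> length (fst (gp_bracket bg bh \<mu> L a b)) = length (fst a)"
  by (simp add: gp_bracket_def)

lemma gpb_nth: "length (fst a) = length (fst b) \<Longrightarrow> i < length (fst a) \<Longrightarrow>
   fst (gp_bracket bg bh \<mu> L a b) ! i = bg (fst a ! i) (fst b ! i) + L (snd a + sfx \<mu> (fst a) i) (fst b ! i)
      - L (snd b + sfx \<mu> (fst b) i) (fst a ! i)"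
  by (simp add: gp_bracket_def to_string_nth sd_bracket_def)

lemma gpb_snd: "snd (gp_bracket bg bh \<mu> L a b) = bh (snd a) (snd b)"
  by (simp add: gp_bracket_def)


lemma cm_facts:
  assumes "crossed_module bg bh \<mu> L"
  shows "bg x y = - bg y x" "bh u v = - bh v u" "linear \<mu>" "\<mu> (bg x y) = bh (\<mu> x) (\<mu> y)"
    "L (u + v) x = L u x + L v x" "L u (x + y) = L u x + L u y" "L (\<mu> x) y = bg x y"
    "bg (x + x') y = bg x y + bg x' y" "bg x (y + y') = bg x y + bg x y'"
    "bh (u + u') v = bh u v + bh u' v" "bh u (v + v') = bh u v + bh u v'"
    "\<mu> (L u x) = bh u (\<mu> x)"
    "\<mu> (x + y) = \<mu> x + \<mu> y" "\<mu> (x - y) = \<mu> x - \<mu> y"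
proof -
  have bg: "bilinear bg" "\<And>x. bg x x = 0" and bh: "bilinear bh" "\<And>x. bh x x = 0"
    and lm: "lie_hom bg bh \<mu>"
    and Ll: "\<And>x. linear (\<lambda>y. L y x)" and Lr: "\<And>y. linear (L y)"
    and rest: "\<forall>y x. \<mu> (L y x) = bh y (\<mu> x)" "\<forall>x0 x1. L (\<mu> x0) x1 = bg x0 x1"
    using assms unfolding crossed_module_def lie_algebra_def by auto
  have anti: "h x y = - h y x" if "bilinear h" "\<And>x. h x x = 0" for h :: "'z::real_vector \<Rightarrow> 'z \<Rightarrow> 'z" and x y
  proof -
    have "h (x + y) (x + y) = h x x + h x y + (h y x + h y y)" using that(1) by (simp add: bilinear_ladd bilinear_radd)
    then have "h x y + h y x = 0" using that(2) by simp
    then show ?thesis by (simp add: eq_neg_iff_add_eq_0)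
  qed
  show "bg x y = - bg y x" using anti[OF bg] .
  show "bh u v = - bh v u" using anti[OF bh] .
  show lin: "linear \<mu>" using lm by (simp add: lie_hom_def)
  show "\<mu> (bg x y) = bh (\<mu> x) (\<mu> y)" using lm by (simp add: lie_hom_def)
  show "L (u + v) x = L u x + L v x" using linear_add[OF Ll] by simp
  show "L u (x + y) = L u x + L u y" using linear_add[OF Lr] by simp
  show "L (\<mu> x) y = bg x y" using rest by simp
  show "bg (x + x') y = bg x y + bg x' y" "bg x (y + y') = bg x y + bg x y'"
    using bg by (simp_all add: bilinear_ladd bilinear_radd)
  show "bh (u + u') v = bh u v + bh u' v" "bh u (v + v') = bh u v + bh u v'"
    using bh by (simp_all add: bilinear_ladd bilinear_radd)
  show "\<mu> (L u x) = bh u (\<mu> x)" using rest by simp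
  show "\<mu> (x + y) = \<mu> x + \<mu> y" "\<mu> (x - y) = \<mu> x - \<mu> y" using lin by (simp_all add: linear_add linear_diff)
qed

lemma last_nth': "length xs = Suc p \<Longrightarrow> last xs = xs ! p"
  by (cases xs rule: rev_cases) (auto simp: nth_append)

lemma sfx_step: "Suc i < length xs \<Longrightarrow> sfx \<mu> xs i = \<mu> (xs ! Suc i) + sfx \<mu> xs (Suc i)"
  by (simp add: sfx_def Cons_nth_drop_Suc[symmetric])

lemma sfx_last: "length xs = Suc i \<Longrightarrow> sfx \<mu> xs i = 0"
  by (simp add: sfx_def)

lemma sfx_butlast: "Suc i < length xs \<Longrightarrow> sfx \<mu> xs i = sfx \<mu> (butlast xs) i + \<mu> (last xs)"
proof -
  assume "Suc i < length xs"
  then have "xs \<noteq> []" by auto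
  then have "xs = butlast xs @ [last xs]" by simp
  then have "drop (Suc i) xs = drop (Suc i) (butlast xs) @ [last xs]"
  proof -
    have "drop (Suc i) xs = drop (Suc i) (butlast xs) @ drop (Suc i - length (butlast xs)) [last xs]"
      using drop_append[of "Suc i" "butlast xs" "[last xs]"] \<open>xs = butlast xs @ [last xs]\<close> by simp
    moreover have "Suc i - length (butlast xs) = 0" using \<open>Suc i < length xs\<close> by simp
    ultimately show ?thesis by simp
  qed
  then show ?thesis by (simp add: sfx_def)
qed

lemma merge_nth:
  assumes "length xs = Suc p" "1 \<le> k" "k \<le> p" "i < p"
  shows "(take (k - 1) xs @ [xs ! (k - 1) + xs ! k] @ drop (k + 1) xs) ! i =
     (if i < k - 1 then xs ! i else if i = k - 1 then xs ! (k - 1) + xs ! k else xs ! Suc i)"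
  using assms by (auto simp: nth_append min_def)

lemma merge_len:
  assumes "length xs = Suc p" "1 \<le> k" "k \<le> p"
  shows "length (take (k - 1) xs @ [xs ! (k - 1) + xs ! k] @ drop (k + 1) xs) = p"
  using assms by auto

lemma merge_sfx:
  assumes "length xs = Suc p" "1 \<le> k" "k \<le> p" "i < p" and mu: "\<And>x y. \<mu> (x + y) = \<mu> x + \<mu> y"
  shows "sfx \<mu> (take (k - 1) xs @ [xs ! (k - 1) + xs ! k] @ drop (k + 1) xs) i =
     (if i < k - 1 then sfx \<mu> xs i else sfx \<mu> xs (Suc i))"
proof (cases "i < k - 1")
  case True
  have d: "drop (k - 1) xs = xs ! (k - 1) # xs ! k # drop (k + 1) xs"
  proof -
    have k1: "Suc (k - 1) = k" using assms by simp
    have "drop (k - 1) xs = xs ! (k - 1) # drop k xs"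
      using Cons_nth_drop_Suc[of "k - 1" xs] assms k1 by simp
    also have "drop k xs = xs ! k # drop (k + 1) xs"
      using Cons_nth_drop_Suc[of k xs] assms by simp
    finally show ?thesis .
  qed
  have "drop (Suc i) xs = drop (Suc i) (take (k - 1) xs) @ drop (k - 1) xs"
  proof -
    have "drop (Suc i) xs = drop (Suc i) (take (k - 1) xs) @ drop (Suc i - length (take (k - 1) xs)) (drop (k - 1) xs)"
      using drop_append[of "Suc i" "take (k - 1) xs" "drop (k - 1) xs"] by (simp only: append_take_drop_id)
    moreover have "Suc i - length (take (k - 1) xs) = 0" using True assms by simp
    ultimately show ?thesis by simp
  qed
  moreover have "drop (Suc i) (take (k - 1) xs @ [xs ! (k - 1) + xs ! k] @ drop (k + 1) xs) =
      drop (Suc i) (take (k - 1) xs) @ [xs ! (k - 1) + xs ! k] @ drop (k + 1) xs"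
    using True assms by (simp add: drop_append)
  ultimately show ?thesis using True d by (simp add: sfx_def mu)
next
  case False
  have "drop (Suc i) (take (k - 1) xs @ [xs ! (k - 1) + xs ! k] @ drop (k + 1) xs) = drop (Suc (Suc i)) xs"
  proof -
    have e: "Suc (Suc i) - k = Suc (Suc i - k)" using False assms(2) by presburger
    have e2: "Suc i - k + Suc k = Suc (Suc i)" using False assms(2) by presburger
    show ?thesis using False assms by (simp add: drop_append min_def e e2)
  qed
  then show ?thesis using False by (simp add: sfx_def)
qed

lemma merge_comp:
  assumes cm: "crossed_module bg bh \<mu> L"
  shows "bg (u + v) (u' + v') + L (ya + S) (u' + v') - L (yb + S') (u + v) =
    (bg u u' + L (ya + (\<mu> v + S)) u' - L (yb + (\<mu> v' + S')) u) + (bg v v' + L (ya + S) v' - L (yb + S') v)"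
proof -
  note F = cm_facts[OF cm]
  have "bg u v' = - bg v' u" by (rule F(1))
  then show ?thesis by (simp add: F(5,6,7,8,9) algebra_simps)
qed

lemma last_comp:
  assumes cm: "crossed_module bg bh \<mu> L"
  shows "bh ya yb + \<mu> (bg u v + L ya v - L yb u) = bh (ya + \<mu> u) (yb + \<mu> v)"
proof -
  note F = cm_facts[OF cm]
  have "bh yb (\<mu> u) = - bh (\<mu> u) yb" by (rule F(2))
  then show ?thesis by (simp add: F(4,10,11,12,13,14) algebra_simps)
qed

lemma face_hom:
  assumes cm: "crossed_module bg bh \<mu> L"
    and la: "length (fst a) = Suc p" and lb: "length (fst b) = Suc p" and k: "k \<le> Suc p"
  shows "face \<mu> p k (gp_bracket bg bh \<mu> L a b) = gp_bracket bg bh \<mu> L (face \<mu> p k a) (face \<mu> p k b)"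
proof -
  note F = cm_facts[OF cm]
  obtain xa ya where a: "a = (xa, ya)" by (cases a)
  obtain xb yb where b: "b = (xb, yb)" by (cases b)
  have la': "length xa = Suc p" and lb': "length xb = Suc p" using la lb a b by auto
  let ?G = "gp_bracket bg bh \<mu> L a b"
  have lG: "length (fst ?G) = Suc p" using gpb_len[of a b] la lb by simp
  consider "k = 0" | "1 \<le> k \<and> k \<le> p" | "k = Suc p" using k by linarith
  then show ?thesis
  proof cases
    case 1
    show ?thesis
    proof (rule prod_eqI)
      show "snd (face \<mu> p k ?G) = snd (gp_bracket bg bh \<mu> L (face \<mu> p k a) (face \<mu> p k b))"
        using 1 by (simp add: face_def gpb_snd)
      show "fst (face \<mu> p k ?G) = fst (gp_bracket bg bh \<mu> L (face \<mu> p k a) (face \<mu> p k b))"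
      proof (rule nth_equalityI)
        show "length (fst (face \<mu> p k ?G)) = length (fst (gp_bracket bg bh \<mu> L (face \<mu> p k a) (face \<mu> p k b)))"
          using 1 lG la' lb' a b by (simp add: face_def gpb_len)
        fix i assume "i < length (fst (face \<mu> p k ?G))"
        then have i: "i < p" using 1 lG by (simp add: face_def)
        have s: "sfx \<mu> (tl xs) i = sfx \<mu> xs (Suc i)" for xs :: "'a list"
          by (simp add: sfx_def drop_Suc)
        show "fst (face \<mu> p k ?G) ! i = fst (gp_bracket bg bh \<mu> L (face \<mu> p k a) (face \<mu> p k b)) ! i"
          using 1 i la' lb' a b lG
          by (simp add: face_def gpb_nth gpb_len nth_tl s)
      qed
    qed
  next
    case 2
    then have k0: "k \<noteq> 0" "k \<le> p" "1 \<le> k" by auto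
    have mu: "\<And>x y. \<mu> (x + y) = \<mu> x + \<mu> y" by (rule F(13))
    show ?thesis
    proof (rule prod_eqI)
      show "snd (face \<mu> p k ?G) = snd (gp_bracket bg bh \<mu> L (face \<mu> p k a) (face \<mu> p k b))"
        using k0 by (simp add: face_def gpb_snd a b)
      show "fst (face \<mu> p k ?G) = fst (gp_bracket bg bh \<mu> L (face \<mu> p k a) (face \<mu> p k b))"
      proof (rule nth_equalityI)
        show "length (fst (face \<mu> p k ?G)) = length (fst (gp_bracket bg bh \<mu> L (face \<mu> p k a) (face \<mu> p k b)))"
          using k0 lG la' lb' a b by (simp add: face_def gpb_len)
        fix i assume "i < length (fst (face \<mu> p k ?G))"
        then have i: "i < p" using k0 lG by (simp add: face_def)
        have fa: "face \<mu> p k a = (take (k - 1) xa @ [xa ! (k - 1) + xa ! k] @ drop (k + 1) xa, ya)"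
          using k0 a by (simp add: face_def)
        have fb: "face \<mu> p k b = (take (k - 1) xb @ [xb ! (k - 1) + xb ! k] @ drop (k + 1) xb, yb)"
          using k0 b by (simp add: face_def)
        have fG: "fst (face \<mu> p k ?G) = take (k - 1) (fst ?G) @ [fst ?G ! (k - 1) + fst ?G ! k] @ drop (k + 1) (fst ?G)"
          using k0 by (simp add: face_def)
        have G: "\<And>j. j < Suc p \<Longrightarrow> fst ?G ! j = bg (xa ! j) (xb ! j) + L (ya + sfx \<mu> xa j) (xb ! j)
            - L (yb + sfx \<mu> xb j) (xa ! j)"
          using gpb_nth[of a b] la lb a b by simp
        have R: "fst (gp_bracket bg bh \<mu> L (face \<mu> p k a) (face \<mu> p k b)) ! i =
          bg ((take (k - 1) xa @ [xa ! (k - 1) + xa ! k] @ drop (k + 1) xa) ! i) ((take (k - 1) xb @ [xb ! (k - 1) + xb ! k] @ drop (k + 1) xb) ! i)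
          + L (ya + sfx \<mu> (take (k - 1) xa @ [xa ! (k - 1) + xa ! k] @ drop (k + 1) xa) i) ((take (k - 1) xb @ [xb ! (k - 1) + xb ! k] @ drop (k + 1) xb) ! i)
          - L (yb + sfx \<mu> (take (k - 1) xb @ [xb ! (k - 1) + xb ! k] @ drop (k + 1) xb) i) ((take (k - 1) xa @ [xa ! (k - 1) + xa ! k] @ drop (k + 1) xa) ! i)"
          unfolding fa fb using gpb_nth[of "(take (k - 1) xa @ [xa ! (k - 1) + xa ! k] @ drop (k + 1) xa, ya)"
              "(take (k - 1) xb @ [xb ! (k - 1) + xb ! k] @ drop (k + 1) xb, yb)" i]
            merge_len[OF la' k0(3) k0(2)] merge_len[OF lb' k0(3) k0(2)] i by simp
        show "fst (face \<mu> p k ?G) ! i = fst (gp_bracket bg bh \<mu> L (face \<mu> p k a) (face \<mu> p k b)) ! i"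
          unfolding R fG merge_nth[OF lG k0(3) k0(2) i] merge_nth[OF la' k0(3) k0(2) i] merge_nth[OF lb' k0(3) k0(2) i]
            merge_sfx[OF la' k0(3) k0(2) i mu] merge_sfx[OF lb' k0(3) k0(2) i mu]
        proof -
          consider "i < k - 1" | "i = k - 1" | "i > k - 1" by linarith
          then show "(if i < k - 1 then fst ?G ! i else if i = k - 1 then fst ?G ! (k - 1) + fst ?G ! k else fst ?G ! Suc i) =
    bg (if i < k - 1 then xa ! i else if i = k - 1 then xa ! (k - 1) + xa ! k else xa ! Suc i)
     (if i < k - 1 then xb ! i else if i = k - 1 then xb ! (k - 1) + xb ! k else xb ! Suc i) +
    L (ya + (if i < k - 1 then sfx \<mu> xa i else sfx \<mu> xa (Suc i)))
     (if i < k - 1 then xb ! i else if i = k - 1 then xb ! (k - 1) + xb ! k else xb ! Suc i) -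
    L (yb + (if i < k - 1 then sfx \<mu> xb i else sfx \<mu> xb (Suc i)))
     (if i < k - 1 then xa ! i else if i = k - 1 then xa ! (k - 1) + xa ! k else xa ! Suc i)"
          proof cases
            case 1 then show ?thesis using G[of i] i by simp
          next
            case 3 then show ?thesis using G[of "Suc i"] i by simp
          next
            case 4: 2
            have kk: "Suc (k - 1) = k" "k - 1 < Suc p" "k < Suc p" using k0 by auto
            have sa: "sfx \<mu> xa (k - 1) = \<mu> (xa ! k) + sfx \<mu> xa k"
              using sfx_step[of "k - 1" xa \<mu>] kk la' by simp
            have sb: "sfx \<mu> xb (k - 1) = \<mu> (xb ! k) + sfx \<mu> xb k"
              using sfx_step[of "k - 1" xb \<mu>] kk la' lb' by simp
            show ?thesis using 4 kk G[of "k - 1"] G[of k] sa sb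
              by (simp add: merge_comp[OF cm])
          qed
        qed
      qed
    qed
  next
    case 3
    then have k0: "k \<noteq> 0" "\<not> k \<le> p" by auto
    have G: "\<And>j. j < Suc p \<Longrightarrow> fst ?G ! j = bg (xa ! j) (xb ! j) + L (ya + sfx \<mu> xa j) (xb ! j)
        - L (yb + sfx \<mu> xb j) (xa ! j)"
      using gpb_nth[of a b] la lb a b by simp
    have fa: "face \<mu> p k a = (butlast xa, ya + \<mu> (xa ! p))"
      using k0 a la' by (simp add: face_def last_nth')
    have fb: "face \<mu> p k b = (butlast xb, yb + \<mu> (xb ! p))"
      using k0 b lb' by (simp add: face_def last_nth')
    have fG: "face \<mu> p k ?G = (butlast (fst ?G), snd ?G + \<mu> (fst ?G ! p))"
      using k0 lG by (simp add: face_def last_nth')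
    show ?thesis
    proof (rule prod_eqI)
      show "snd (face \<mu> p k ?G) = snd (gp_bracket bg bh \<mu> L (face \<mu> p k a) (face \<mu> p k b))"
      proof -
        have z: "sfx \<mu> xa p = 0" "sfx \<mu> xb p = 0" using la' lb' by (simp_all add: sfx_last)
        show ?thesis unfolding fG fa fb using G[of p] z
          by (simp add: gpb_snd a b last_comp[OF cm])
      qed
      show "fst (face \<mu> p k ?G) = fst (gp_bracket bg bh \<mu> L (face \<mu> p k a) (face \<mu> p k b))"
      proof (rule nth_equalityI)
        show "length (fst (face \<mu> p k ?G)) = length (fst (gp_bracket bg bh \<mu> L (face \<mu> p k a) (face \<mu> p k b)))"
          unfolding fG fa fb using lG la' lb' by (simp add: gpb_len)
        fix i assume "i < length (fst (face \<mu> p k ?G))"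
        then have i: "i < p" using lG fG by simp
        have s1: "sfx \<mu> xa i = sfx \<mu> (butlast xa) i + \<mu> (xa ! p)"
          using sfx_butlast[of i xa \<mu>] i la' by (simp add: last_nth'[OF la'])
        have s2: "sfx \<mu> xb i = sfx \<mu> (butlast xb) i + \<mu> (xb ! p)"
          using sfx_butlast[of i xb \<mu>] i lb' by (simp add: last_nth'[OF lb'])
        show "fst (face \<mu> p k ?G) ! i = fst (gp_bracket bg bh \<mu> L (face \<mu> p k a) (face \<mu> p k b)) ! i"
          unfolding fG fa fb using G[of i] i la' lb' lG gpb_nth[of "(butlast xa, ya + \<mu> (xa ! p))" "(butlast xb, yb + \<mu> (xb ! p))" i]
          by (simp add: nth_butlast s1 s2 add_ac)
      qed
    qed
  qed
qed


lemma rem1_map: "remove1_at j (map f xs) = map f (remove1_at j xs)"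
  by (simp add: remove1_at_def take_map drop_map)

lemma rem2_map: "remove2_at m n (map f xs) = map f (remove2_at m n xs)"
  by (simp add: remove2_at_def rem1_map)

lemma t_hat_face:
  assumes cm: "crossed_module bg bh \<mu> L" and l: "length (fst \<xi>) = Suc p" and k: "k \<le> Suc p"
  shows "t_hat \<mu> (face \<mu> p k \<xi>) = t_hat \<mu> \<xi> - (if k = 0 then \<mu> (hd (fst \<xi>)) else 0)"
proof -
  note F = cm_facts[OF cm]
  obtain xs y where xi: "\<xi> = (xs, y)" by (cases \<xi>)
  have lx: "length xs = Suc p" using l xi by simp
  have ne: "xs \<noteq> []" using lx by auto
  consider "k = 0" | "1 \<le> k \<and> k \<le> p" | "k = Suc p" using k by linarith
  then show ?thesis
  proof cases
    case 1
    have "xs = hd xs # tl xs" using ne by simp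
    then have "sum_list (map \<mu> xs) = \<mu> (hd xs) + sum_list (map \<mu> (tl xs))"
      by (metis list.simps(9) sum_list.Cons)
    then show ?thesis using 1 xi by (simp add: face_def t_hat_def)
  next
    case 2
    have k1: "Suc (k - 1) = k" using 2 by simp
    have d: "drop (k - 1) xs = xs ! (k - 1) # xs ! k # drop (k + 1) xs"
    proof -
      have "drop (k - 1) xs = xs ! (k - 1) # drop k xs"
        using Cons_nth_drop_Suc[of "k - 1" xs] lx 2 k1 by simp
      also have "drop k xs = xs ! k # drop (k + 1) xs"
        using Cons_nth_drop_Suc[of k xs] lx 2 by simp
      finally show ?thesis .
    qed
    have "sum_list (map \<mu> xs) = sum_list (map \<mu> (take (k - 1) xs)) + sum_list (map \<mu> (drop (k - 1) xs))"
      by (metis append_take_drop_id map_append sum_list_append)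
    then have "sum_list (map \<mu> xs) = sum_list (map \<mu> (take (k - 1) xs @ [xs ! (k - 1) + xs ! k] @ drop (k + 1) xs))"
      using d by (simp add: F(13) add_ac)
    then show ?thesis using 2 xi by (simp add: face_def t_hat_def)
  next
    case 3
    have "sum_list (map \<mu> xs) = sum_list (map \<mu> (butlast xs @ [last xs]))" using ne by simp
    also have "\<dots> = sum_list (map \<mu> (butlast xs)) + \<mu> (last xs)" by simp
    finally have "sum_list (map \<mu> xs) = sum_list (map \<mu> (butlast xs)) + \<mu> (last xs)" .
    then show ?thesis using 3 xi by (simp add: face_def t_hat_def add_ac)
  qed
qed

lemma gp_carrier_len: "\<xi> \<in> gp_carrier p \<longleftrightarrow> length (fst \<xi>) = p"
  by (simp add: gp_carrier_def)

theorem mainTheorem9: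
  fixes bg :: "'g::real_vector \<Rightarrow> 'g \<Rightarrow> 'g" and bh :: "'h::real_vector \<Rightarrow> 'h \<Rightarrow> 'h"
    and \<mu> :: "'g \<Rightarrow> 'h" and L :: "'h \<Rightarrow> 'g \<Rightarrow> 'g"
    and \<phi> :: "'w::real_vector \<Rightarrow> 'v::real_vector"
    and r01 :: "'h \<Rightarrow> 'w \<Rightarrow> 'w" and r00 :: "'h \<Rightarrow> 'v \<Rightarrow> 'v" and r1 :: "'g \<Rightarrow> 'v \<Rightarrow> 'w"
    and p q :: nat
    and \<omega> :: "('g list \<times> 'h) list \<Rightarrow> 'v"
    and \<Xi> :: "('g list \<times> 'h) list"
  assumes "crossed_module bg bh \<mu> L"
    and "two_representation bg bh \<mu> L \<phi> r01 r00 r1"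
    and "alt_multilinear p q \<omega>"
    and "length \<Xi> = q + 1"
    and "set \<Xi> \<subseteq> gp_carrier (p + 1)"
  shows "ce_delta bg bh \<mu> L r00 (simp_partial \<mu> p \<omega>) \<Xi> =
           simp_partial \<mu> p (ce_delta bg bh \<mu> L r00 \<omega>) \<Xi> +
           \<phi> (\<Sum>j<q + 1. ((-1) ^ j) *\<^sub>R r1 (hd (fst (\<Xi> ! j))) (\<omega> (map (face \<mu> p 0) (remove1_at j \<Xi>)))) \<and>
         ce_delta bg bh \<mu> L r00 (simp_partial \<mu> p \<omega>) \<Xi> =
           simp_partial \<mu> p (ce_delta bg bh \<mu> L r00 \<omega>) \<Xi> +
           Delta \<mu> p \<phi> (delta1 r1 \<omega>) \<Xi>"
proof -
  note cm = assms(1)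
  have lphi: "linear \<phi>" and r00l: "\<And>v. linear (\<lambda>y. r00 y v)" and r00r: "\<And>y. linear (r00 y)"
    and r00mu: "\<And>x v. r00 (\<mu> x) v = \<phi> (r1 x v)"
    using assms(2) unfolding two_representation_def representation_def by auto
  have lenX: "length \<Xi> = q + 1" by (rule assms(4))
  have lenj: "\<And>j. j < q + 1 \<Longrightarrow> length (fst (\<Xi> ! j)) = Suc p"
  proof -
    fix j assume "j < q + 1"
    then have "\<Xi> ! j \<in> set \<Xi>" using lenX by simp
    then have "\<Xi> ! j \<in> gp_carrier (p + 1)" using assms(5) by blast
    then show "length (fst (\<Xi> ! j)) = Suc p" by (simp add: gp_carrier_len)
  qed
  define K where "K = {0..p+1}"
  define I where "I = {(m, n). m < n \<and> n < q + 1}"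
  have finI: "finite I" unfolding I_def
    by (rule finite_subset[of _ "{..<q+1} \<times> {..<q+1}"]) auto
  define F where "F k = face \<mu> p k" for k
  define a where "a j k = r00 (t_hat \<mu> (\<Xi> ! j)) (\<omega> (map (F k) (remove1_at j \<Xi>)))" for j k
  define c where "c j = \<phi> (r1 (hd (fst (\<Xi> ! j))) (\<omega> (map (F 0) (remove1_at j \<Xi>))))" for j
  define b where "b mn k = \<omega> (map (F k) (gp_bracket bg bh \<mu> L (\<Xi> ! fst mn) (\<Xi> ! snd mn) # remove2_at (fst mn) (snd mn) \<Xi>))" for mn k
  have LHS: "ce_delta bg bh \<mu> L r00 (simp_partial \<mu> p \<omega>) \<Xi> =
     (\<Sum>j<q+1. ((-1::real)^j) *\<^sub>R (\<Sum>k\<in>{0..p+1}. ((-1::real)^k) *\<^sub>R a j k)) +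
     (\<Sum>(m,n)\<in>I. ((-1::real)^(m+n)) *\<^sub>R (\<Sum>k\<in>{0..p+1}. ((-1::real)^k) *\<^sub>R b (m,n) k))"
    unfolding ce_delta_def simp_partial_def lenX
  proof (rule arg_cong2[where f="(+)"])
    show "(\<Sum>j<q+1. ((-1::real)^j) *\<^sub>R r00 (t_hat \<mu> (\<Xi> ! j)) (\<Sum>k\<in>{0..p+1}. ((-1::real)^k) *\<^sub>R \<omega> (map (face \<mu> p k) (remove1_at j \<Xi>))))
       = (\<Sum>j<q+1. ((-1::real)^j) *\<^sub>R (\<Sum>k\<in>{0..p+1}. ((-1::real)^k) *\<^sub>R a j k))"
      by (rule sum.cong[OF refl]) (simp only: a_def F_def linear_sum[OF r00r] linear_scale[OF r00r])
    show "(\<Sum>(m, n)\<in>{(m, n). m < n \<and> n < q + 1}. ((-1::real) ^ (m + n)) *\<^sub>R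
        (\<Sum>k\<in>{0..p+1}. ((-1::real)^k) *\<^sub>R \<omega> (map (face \<mu> p k) (gp_bracket bg bh \<mu> L (\<Xi> ! m) (\<Xi> ! n) # remove2_at m n \<Xi>))))
      = (\<Sum>(m,n)\<in>I. ((-1::real)^(m+n)) *\<^sub>R (\<Sum>k\<in>{0..p+1}. ((-1::real)^k) *\<^sub>R b (m,n) k))"
      unfolding I_def b_def F_def fst_conv snd_conv ..
  qed
  have RHS: "simp_partial \<mu> p (ce_delta bg bh \<mu> L r00 \<omega>) \<Xi> =
     (\<Sum>k\<in>{0..p+1}. ((-1::real)^k) *\<^sub>R ((\<Sum>j<q+1. ((-1::real)^j) *\<^sub>R (a j k - (if k = 0 then c j else 0)))
             + (\<Sum>(m,n)\<in>I. ((-1::real)^(m+n)) *\<^sub>R b (m,n) k)))"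
    unfolding simp_partial_def
  proof (rule sum.cong[OF refl])
    fix k assume k: "k \<in> {0..p+1}"
    have A: "r00 (t_hat \<mu> (map (face \<mu> p k) \<Xi> ! j)) (\<omega> (remove1_at j (map (face \<mu> p k) \<Xi>)))
        = a j k - (if k = 0 then c j else 0)" if j: "j < q + 1" for j
    proof -
      have "t_hat \<mu> (map (face \<mu> p k) \<Xi> ! j) = t_hat \<mu> (\<Xi> ! j) - (if k = 0 then \<mu> (hd (fst (\<Xi> ! j))) else 0)"
        using t_hat_face[OF cm lenj[OF j], of k] k j lenX by simp
      then show ?thesis
        by (simp add: a_def c_def F_def rem1_map linear_diff[OF r00l] linear_0[OF r00l] r00mu)
    qed
    have B: "\<omega> (gp_bracket bg bh \<mu> L (map (face \<mu> p k) \<Xi> ! m) (map (face \<mu> p k) \<Xi> ! n) #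
          remove2_at m n (map (face \<mu> p k) \<Xi>)) = b (m, n) k" if mn: "(m, n) \<in> I" for m n
    proof -
      have "m < q + 1" "n < q + 1" using mn by (auto simp: I_def)
      then show ?thesis using face_hom[OF cm lenj lenj, of m n k] k lenX
        by (simp add: b_def F_def rem2_map)
    qed
    show "((-1::real)^k) *\<^sub>R ce_delta bg bh \<mu> L r00 \<omega> (map (face \<mu> p k) \<Xi>) =
      ((-1::real)^k) *\<^sub>R ((\<Sum>j<q+1. ((-1::real)^j) *\<^sub>R (a j k - (if k = 0 then c j else 0)))
             + (\<Sum>(m,n)\<in>I. ((-1::real)^(m+n)) *\<^sub>R b (m,n) k))"
      unfolding ce_delta_def length_map lenX
    proof -
      have 1: "(\<Sum>j<q+1. ((-1::real)^j) *\<^sub>R r00 (t_hat \<mu> (map (face \<mu> p k) \<Xi> ! j)) (\<omega> (remove1_at j (map (face \<mu> p k) \<Xi>))))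
          = (\<Sum>j<q+1. ((-1::real)^j) *\<^sub>R (a j k - (if k = 0 then c j else 0)))"
        by (rule sum.cong[OF refl]) (simp only: lessThan_iff A)
      have 2: "(\<Sum>(m, n)\<in>{(m, n). m < n \<and> n < q + 1}. ((-1::real) ^ (m + n)) *\<^sub>R
          \<omega> (gp_bracket bg bh \<mu> L (map (face \<mu> p k) \<Xi> ! m) (map (face \<mu> p k) \<Xi> ! n) #
          remove2_at m n (map (face \<mu> p k) \<Xi>))) = (\<Sum>(m,n)\<in>I. ((-1::real)^(m+n)) *\<^sub>R b (m,n) k)"
        unfolding I_def[symmetric] using B by (intro sum.cong refl) auto
      show "((-1::real)^k) *\<^sub>R ((\<Sum>j<q+1. ((-1::real)^j) *\<^sub>R r00 (t_hat \<mu> (map (face \<mu> p k) \<Xi> ! j)) (\<omega> (remove1_at j (map (face \<mu> p k) \<Xi>))))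
          + (\<Sum>(m, n)\<in>{(m, n). m < n \<and> n < q + 1}. ((-1::real) ^ (m + n)) *\<^sub>R
          \<omega> (gp_bracket bg bh \<mu> L (map (face \<mu> p k) \<Xi> ! m) (map (face \<mu> p k) \<Xi> ! n) #
          remove2_at m n (map (face \<mu> p k) \<Xi>)))) =
      ((-1::real)^k) *\<^sub>R ((\<Sum>j<q+1. ((-1::real)^j) *\<^sub>R (a j k - (if k = 0 then c j else 0)))
             + (\<Sum>(m,n)\<in>I. ((-1::real)^(m+n)) *\<^sub>R b (m,n) k))"
        by (simp only: 1 2)
    qed
  qed
  have PHI: "\<phi> (\<Sum>j<q + 1. ((-1) ^ j) *\<^sub>R r1 (hd (fst (\<Xi> ! j))) (\<omega> (map (face \<mu> p 0) (remove1_at j \<Xi>))))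
     = (\<Sum>j<q+1. ((-1::real)^j) *\<^sub>R c j)"
    unfolding linear_sum[OF lphi] c_def F_def by (simp only: linear_scale[OF lphi])
  have main: "ce_delta bg bh \<mu> L r00 (simp_partial \<mu> p \<omega>) \<Xi> =
           simp_partial \<mu> p (ce_delta bg bh \<mu> L r00 \<omega>) \<Xi> +
           \<phi> (\<Sum>j<q + 1. ((-1) ^ j) *\<^sub>R r1 (hd (fst (\<Xi> ! j))) (\<omega> (map (face \<mu> p 0) (remove1_at j \<Xi>))))"
    unfolding LHS RHS PHI by (rule alg[OF finI])
  have DD: "Delta \<mu> p \<phi> (delta1 r1 \<omega>) \<Xi> =
      \<phi> (\<Sum>j<q + 1. ((-1) ^ j) *\<^sub>R r1 (hd (fst (\<Xi> ! j))) (\<omega> (map (face \<mu> p 0) (remove1_at j \<Xi>))))"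
    by (simp add: Delta_def delta1_def lenX)
  show ?thesis using main DD by simp
qed

end
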